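(* For every natural number $n\ge 1$, $p_{min}(n+1)=p_{min}(n)\pm 1$. Moreover, for every integer $k\ge 1$, $p_{min}(n)-1\le p_{min}(n+k)\le p_{min}(n)+k$, and if $p_{min}(n+1)=p_{min}(n)+1$, then $p_{min}(n)\le p_{min}(n+k)$.
   Context: A polyiamond is a planar shape formed by gluing together finitely many congruent (closed) equilateral triangles (tiles) of the regular triangular lattice along their edges: any two tiles that intersect meet in an entire edge, and the union has connected interior. The perimeter $p(A)$ of a polyiamond $A$ is the number of lattice edges lying on the topological boundary of $A$. For $n\ge1$, $p_{min}(n)$ is the minimum of $p(A)$ over all polyiamonds $A$ with exactly $n$ tiles. *)

theory Defs
  imports Main
begin

text \<open>The regular triangular lattice, in lattice coordinates: lattice points are
  integer pairs (a,b) standing for a*u + b*v with u, v unit vectors at angle 60 degrees.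
  A tile is a triple (a,b,up): the up-pointing triangle (a,b,True) has vertices
  (a,b), (a+1,b), (a,b+1); the down-pointing triangle (a,b,False) has vertices
  (a+1,b), (a,b+1), (a+1,b+1).  Every lattice triangle arises exactly once.\<close>

type_synonym tile = "int \<times> int \<times> bool"

definition tri_verts :: "tile \<Rightarrow> (int \<times> int) set" where
  "tri_verts t = (case t of (a, b, up) \<Rightarrow>
     (if up then {(a, b), (a + 1, b), (a, b + 1)}
      else {(a + 1, b), (a, b + 1), (a + 1, b + 1)}))"

definition tri_edges :: "tile \<Rightarrow> (int \<times> int) set set" where
  "tri_edges t = {{p, q} | p q. p \<in> tri_verts t \<and> q \<in> tri_verts t \<and> p \<noteq> q}"

definition tiles_adjacent :: "tile \<Rightarrow> tile \<Rightarrow> bool" where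
  "tiles_adjacent s t \<longleftrightarrow> s \<noteq> t \<and> tri_edges s \<inter> tri_edges t \<noteq> {}"

text \<open>A polyiamond: a finite nonempty set of lattice tiles whose union has connected
  interior, i.e. whose edge-adjacency graph is connected.\<close>
definition polyiamond :: "tile set \<Rightarrow> bool" where
  "polyiamond A \<longleftrightarrow> finite A \<and> A \<noteq> {} \<and>
     (\<forall>s\<in>A. \<forall>t\<in>A. (s, t) \<in> {(x, y). x \<in> A \<and> y \<in> A \<and> tiles_adjacent x y}\<^sup>*)"

definition perimeter :: "tile set \<Rightarrow> nat" where
  "perimeter A = card {e. card {t \<in> A. e \<in> tri_edges t} = 1}"

definition p_min :: "nat \<Rightarrow> nat" where
  "p_min n = (LEAST p. \<exists>A. polyiamond A \<and> card A = n \<and> perimeter A = p)"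

end

theory Submission
  imports Defs
begin

lemma edges3: "p1 \<noteq> p2 \<Longrightarrow> p1 \<noteq> p3 \<Longrightarrow> p2 \<noteq> p3 \<Longrightarrow>
  {{p, q} | p q. p \<in> {p1,p2,p3} \<and> q \<in> {p1,p2,p3} \<and> p \<noteq> q} = {{p1,p2},{p1,p3},{p2,p3}}"
  by (auto simp: insert_commute)

lemma tri_edges_up: "tri_edges (a,b,True) = {{(a,b),(a+1,b)}, {(a,b),(a,b+1)}, {(a+1,b),(a,b+1)}}"
proof -
  have "tri_verts (a,b,True) = {(a,b),(a+1,b),(a,b+1)}" by (simp add: tri_verts_def)
  then show ?thesis unfolding tri_edges_def by (simp only:) (rule edges3, auto)
qed

lemma tri_edges_down: "tri_edges (a,b,False) = {{(a+1,b),(a,b+1)}, {(a+1,b),(a+1,b+1)}, {(a,b+1),(a+1,b+1)}}"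
proof -
  have "tri_verts (a,b,False) = {(a+1,b),(a,b+1),(a+1,b+1)}" by (simp add: tri_verts_def)
  then show ?thesis unfolding tri_edges_def by (simp only:) (rule edges3, auto)
qed


fun nb :: "nat \<Rightarrow> tile \<Rightarrow> tile" where
  "nb d (a,b,u) = (if u then (if d = 0 then (a,b-1,False) else if d = 1 then (a-1,b,False) else (a,b,False))
       else (if d = 0 then (a,b+1,True) else if d = 1 then (a+1,b,True) else (a,b,True)))"

fun edg :: "nat \<Rightarrow> tile \<Rightarrow> (int \<times> int) set" where
  "edg d (a,b,u) = (if u then (if d = 0 then {(a,b),(a+1,b)} else if d = 1 then {(a,b),(a,b+1)} else {(a+1,b),(a,b+1)})
       else (if d = 0 then {(a,b+1),(a+1,b+1)} else if d = 1 then {(a+1,b),(a+1,b+1)} else {(a+1,b),(a,b+1)}))"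

lemma less3: "(d::nat) < 3 \<longleftrightarrow> d = 0 \<or> d = 1 \<or> d = 2" by auto

lemma tri_edges_edg: "tri_edges t = {edg 0 t, edg 1 t, edg 2 t}"
  by (cases t) (auto simp: tri_edges_up tri_edges_down split: bool.splits)

lemma mem_tri_edges: "e \<in> tri_edges t \<longleftrightarrow> (\<exists>d<3. e = edg d t)"
  unfolding tri_edges_edg less3 by auto

lemma nb_nb: "d < 3 \<Longrightarrow> nb d (nb d t) = t"
  by (cases t) (auto simp: less3)

lemma nb_neq: "nb d t \<noteq> t"
  by (cases t) auto

lemma edg_nb: "d < 3 \<Longrightarrow> edg d (nb d t) = edg d t"
  by (cases t) (auto simp: less3 insert_commute)

lemma edg_inj: "d < 3 \<Longrightarrow> d' < 3 \<Longrightarrow> edg d t = edg d' t \<Longrightarrow> d = d'"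
  by (cases t) (auto simp: less3 doubleton_eq_iff split: if_splits)

lemma edg_eq: "d < 3 \<Longrightarrow> d' < 3 \<Longrightarrow> edg d t = edg d' s \<Longrightarrow> d = d' \<and> (s = t \<or> s = nb d t)"
  apply (cases t; cases s)
  apply (auto simp: less3 doubleton_eq_iff split: if_splits)
  done


definition bd :: "tile set \<Rightarrow> (tile \<times> nat) set" where
  "bd A = {(t,d). t \<in> A \<and> d < 3 \<and> nb d t \<notin> A}"

lemma finite_bd: "finite A \<Longrightarrow> finite (bd A)"
proof -
  assume "finite A"
  then have "finite (A \<times> {..<3::nat})" by simp
  moreover have "bd A \<subseteq> A \<times> {..<3}" by (auto simp: bd_def)
  ultimately show ?thesis by (rule finite_subset[rotated])
qed

lemma perim_bd: assumes "finite A" shows "perimeter A = card (bd A)"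
proof -
  let ?E = "{e. card {t \<in> A. e \<in> tri_edges t} = 1}"
  let ?f = "\<lambda>(t,d). edg d t"
  have inj: "inj_on ?f (bd A)"
  proof (rule inj_onI, clarify)
    fix t d t' d' assume h: "(t,d) \<in> bd A" "(t',d') \<in> bd A" "edg d t = edg d' t'"
    then have "d = d' \<and> (t' = t \<or> t' = nb d t)" using edg_eq[of d d' t t'] by (auto simp: bd_def)
    with h show "t = t' \<and> d = d'" by (auto simp: bd_def)
  qed
  have img: "?f ` bd A = ?E"
  proof
    show "?f ` bd A \<subseteq> ?E"
    proof clarify
      fix t d assume h: "(t,d) \<in> bd A"
      have "{s \<in> A. edg d t \<in> tri_edges s} = {t}"
      proof
        show "{s \<in> A. edg d t \<in> tri_edges s} \<subseteq> {t}"
        proof clarify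
          fix s assume "s \<in> A" "edg d t \<in> tri_edges s"
          then obtain d' where "d' < 3" "edg d t = edg d' s" by (auto simp: mem_tri_edges)
          then have "s = t \<or> s = nb d t" using edg_eq[of d d' t s] h by (auto simp: bd_def)
          with h \<open>s \<in> A\<close> show "s = t" by (auto simp: bd_def)
        qed
        show "{t} \<subseteq> {s \<in> A. edg d t \<in> tri_edges s}" using h by (auto simp: bd_def mem_tri_edges)
      qed
      then show "card {s \<in> A. edg d t \<in> tri_edges s} = 1" by simp
    qed
    show "?E \<subseteq> ?f ` bd A"
    proof
      fix e assume "e \<in> ?E"
      then obtain t where t: "{s \<in> A. e \<in> tri_edges s} = {t}" by (auto simp: card_1_singleton_iff)
      then have tA: "t \<in> A" and "e \<in> tri_edges t" by auto
      then obtain d where d: "d < 3" "e = edg d t" by (auto simp: mem_tri_edges)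
      have "nb d t \<notin> A"
      proof
        assume "nb d t \<in> A"
        moreover have "e \<in> tri_edges (nb d t)" using d edg_nb[of d t] by (auto simp: mem_tri_edges)
        ultimately have "nb d t \<in> {s \<in> A. e \<in> tri_edges s}" by simp
        with t nb_neq show False by auto
      qed
      with tA d show "e \<in> ?f ` bd A" by (force simp: bd_def)
    qed
  qed
  show ?thesis unfolding perimeter_def using card_image[OF inj] img by simp
qed


declare nb.simps[simp del] edg.simps[simp del]

lemma adj_nb: "tiles_adjacent s t \<longleftrightarrow> (\<exists>d<3. t = nb d s)"
proof
  assume "tiles_adjacent s t"
  then obtain e where "s \<noteq> t" "e \<in> tri_edges s" "e \<in> tri_edges t" by (auto simp: tiles_adjacent_def)
  then obtain d d' where "d < 3" "d' < 3" "e = edg d s" "e = edg d' t" by (auto simp: mem_tri_edges)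
  with edg_eq[of d d' s t] \<open>s \<noteq> t\<close> show "\<exists>d<3. t = nb d s" by auto
next
  assume "\<exists>d<3. t = nb d s"
  then obtain d where d: "d < 3" "t = nb d s" by auto
  then have "edg d s \<in> tri_edges s \<inter> tri_edges t" using edg_nb[of d s] by (auto simp: mem_tri_edges)
  then show "tiles_adjacent s t" using d nb_neq[of d s] by (auto simp: tiles_adjacent_def)
qed

lemma bd_insert: assumes "finite A" "t \<notin> A"
  shows "int (card (bd (insert t A))) = int (card (bd A)) + 3 - 2 * int (card {d. d < 3 \<and> nb d t \<in> A})"
proof -
  let ?J = "{d. d < 3 \<and> nb d t \<in> A}"
  let ?K = "{(s,d) \<in> bd A. nb d s \<noteq> t}"
  let ?N = "(\<lambda>d. (t,d)) ` ({..<3} - ?J)"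
  let ?L = "(\<lambda>d. (nb d t, d)) ` ?J"
  have fK: "finite ?K" by (rule finite_subset[OF _ finite_bd[OF assms(1)]]) auto
  have e1: "bd (insert t A) = ?K \<union> ?N"
    using assms(2) nb_neq by (auto simp: bd_def image_iff)
  have e2: "bd A = ?K \<union> ?L"
  proof
    show "bd A \<subseteq> ?K \<union> ?L"
    proof (rule subsetI)
      fix p assume p: "p \<in> bd A"
      obtain s d where sd: "p = (s,d)" by (cases p) auto
      show "p \<in> ?K \<union> ?L"
      proof (cases "nb d s = t")
        case True
        have "d < 3" using p sd by (simp add: bd_def)
        then have "s = nb d t" using nb_nb[of d s] True by simp
        have "d \<in> ?J" using p sd \<open>s = nb d t\<close> by (auto simp: bd_def)
        then have "(nb d t, d) \<in> ?L" by (rule imageI)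
        then show ?thesis using sd \<open>s = nb d t\<close> by simp
      next
        case False
        with p sd show ?thesis by simp
      qed
    qed
    show "?K \<union> ?L \<subseteq> bd A"
    proof
      fix p assume "p \<in> ?K \<union> ?L"
      then show "p \<in> bd A"
      proof
        assume "p \<in> ?K" then show ?thesis by (cases p) (simp only: mem_Collect_eq case_prod_conv)
      next
        assume "p \<in> ?L"
        then obtain d where d: "d < 3" "nb d t \<in> A" "p = (nb d t, d)" by blast
        then have "nb d (nb d t) = t" by (simp add: nb_nb)
        with d assms(2) show ?thesis by (simp add: bd_def)
      qed
    qed
  qed
  have d1: "?K \<inter> ?N = {}" using assms(2) by (auto simp: bd_def)
  have d2: "?K \<inter> ?L = {}"
  proof (rule ccontr)
    assume "?K \<inter> ?L \<noteq> {}"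
    then obtain d where d: "d < 3" "(nb d t, d) \<in> ?K" by blast
    then have "nb d (nb d t) \<noteq> t" by simp
    with d(1) show False by (simp add: nb_nb)
  qed
  have cN: "card ?N = 3 - card ?J"
  proof -
    have "card ?N = card ({..<3} - ?J)" by (rule card_image) (auto simp: inj_on_def)
    also have "\<dots> = 3 - card ?J" by (subst card_Diff_subset) auto
    finally show ?thesis .
  qed
  have cL: "card ?L = card ?J" by (rule card_image) (auto simp: inj_on_def)
  have J3: "card ?J \<le> 3"
  proof -
    have "card ?J \<le> card {..<3::nat}" by (rule card_mono) auto
    then show ?thesis by simp
  qed
  have fN: "finite ?N" by simp
  have fL: "finite ?L" by simp
  have "card (bd (insert t A)) = card ?K + card ?N" using arg_cong[OF e1, of card] card_Un_disjoint[OF fK fN d1] by simp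
  moreover have "card (bd A) = card ?K + card ?L" using arg_cong[OF e2, of card] card_Un_disjoint[OF fK fL d2] by (simp only:)
  ultimately show ?thesis using cN cL J3 by simp
qed

lemma bd_parity: "finite A \<Longrightarrow> even (card (bd A) + card A)"
proof (induction A rule: finite_induct)
  case empty
  then show ?case by (simp add: bd_def)
next
  case (insert t A)
  have "int (card (bd (insert t A))) = int (card (bd A)) + 3 - 2 * int (card {d. d < 3 \<and> nb d t \<in> A})"
    by (rule bd_insert[OF insert(1,2)])
  then have "even (int (card (bd (insert t A))) + int (card (insert t A)))"
    using insert by (simp add: even_add)
  then show ?case by presburger
qed


fun xc :: "tile \<Rightarrow> int" where "xc (a,b,u) = a"
fun yc :: "tile \<Rightarrow> int" where "yc (a,b,u) = b"
fun zc :: "tile \<Rightarrow> int" where "zc (a,b,u) = a + b + (if u then 0 else 1)"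
fun tup :: "tile \<Rightarrow> bool" where "tup (a,b,u) = u"

locale strip =
  fixes c :: "tile \<Rightarrow> int" and pos :: "tile \<Rightarrow> int" and dn dp :: "tile \<Rightarrow> nat" and D :: "nat set"
  assumes D: "D = {dn t, dp t}"
  and dnp: "dn t \<noteq> dp t"
  and dn3: "dn t < 3" and dp3: "dp t < 3"
  and cn: "c (nb (dn t) t) = c t" and pn: "pos (nb (dn t) t) = pos t + 1"
  and cp: "c (nb (dp t) t) = c t" and pp: "pos (nb (dp t) t) = pos t - 1"
  and inj: "c s = c t \<Longrightarrow> pos s = pos t \<Longrightarrow> s = t"
begin

definition sb :: "tile set \<Rightarrow> int \<Rightarrow> (tile \<times> nat) set" where
  "sb A v = {(t,d). (t,d) \<in> bd A \<and> d \<in> D \<and> c t = v}"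

definition conv :: "tile set \<Rightarrow> bool" where
  "conv A \<longleftrightarrow> (\<forall>s\<in>A. \<forall>t\<in>A. \<forall>r. c s = c r \<longrightarrow> c t = c r \<longrightarrow> pos s \<le> pos r \<longrightarrow> pos r \<le> pos t \<longrightarrow> r \<in> A)"

lemma bd_mem: "(t,d) \<in> bd A \<Longrightarrow> t \<in> A"
  by (simp add: bd_def)

lemma finite_sb: "finite A \<Longrightarrow> finite (sb A v)"
  by (rule finite_subset[OF _ finite_bd]) (auto simp: sb_def)

lemma ext_tiles:
  assumes "finite A" "v \<in> c ` A"
  obtains tM tm where "tM \<in> A" "c tM = v" "\<And>t. t \<in> A \<Longrightarrow> c t = v \<Longrightarrow> pos t \<le> pos tM"
    "tm \<in> A" "c tm = v" "\<And>t. t \<in> A \<Longrightarrow> c t = v \<Longrightarrow> pos tm \<le> pos t"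
proof -
  let ?Av = "{t \<in> A. c t = v}"
  have f: "finite ?Av" using assms(1) by simp
  have ne: "?Av \<noteq> {}" using assms(2) by auto
  have f2: "finite (pos ` ?Av)" using f by simp
  have ne2: "pos ` ?Av \<noteq> {}" using ne by simp
  have "Max (pos ` ?Av) \<in> pos ` ?Av" by (rule Max_in[OF f2 ne2])
  then obtain tM where tM: "tM \<in> ?Av" "pos tM = Max (pos ` ?Av)" by (rule imageE) simp
  have "Min (pos ` ?Av) \<in> pos ` ?Av" by (rule Min_in[OF f2 ne2])
  then obtain tm where tm: "tm \<in> ?Av" "pos tm = Min (pos ` ?Av)" by (rule imageE) simp
  show ?thesis
  proof (rule that)
    show "tM \<in> A" "c tM = v" "tm \<in> A" "c tm = v" using tM tm by auto
    fix t assume "t \<in> A" "c t = v"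
    then have "t \<in> ?Av" by simp
    then show "pos t \<le> pos tM" "pos tm \<le> pos t" using tM tm f by auto
  qed
qed

lemma lower: assumes "finite A" "v \<in> c ` A" shows "2 \<le> card (sb A v)"
proof -
  obtain tM tm where h: "tM \<in> A" "c tM = v" "\<And>t. t \<in> A \<Longrightarrow> c t = v \<Longrightarrow> pos t \<le> pos tM"
    "tm \<in> A" "c tm = v" "\<And>t. t \<in> A \<Longrightarrow> c t = v \<Longrightarrow> pos tm \<le> pos t"
    using ext_tiles[OF assms] by blast
  have 1: "(tM, dn tM) \<in> sb A v"
  proof -
    have "nb (dn tM) tM \<notin> A"
    proof
      assume "nb (dn tM) tM \<in> A"
      then have "pos (nb (dn tM) tM) \<le> pos tM" using h(3) cn h(2) by simp
      then show False using pn by simp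
    qed
    moreover have "dn tM \<in> D" using D[of tM] by blast
    ultimately show ?thesis using h(1,2) dn3[of tM] unfolding sb_def bd_def by blast
  qed
  have 2: "(tm, dp tm) \<in> sb A v"
  proof -
    have "nb (dp tm) tm \<notin> A"
    proof
      assume "nb (dp tm) tm \<in> A"
      then have "pos tm \<le> pos (nb (dp tm) tm)" using h(6) cp h(5) by simp
      then show False using pp by simp
    qed
    moreover have "dp tm \<in> D" using D[of tm] by blast
    ultimately show ?thesis using h(4,5) dp3[of tm] unfolding sb_def bd_def by blast
  qed
  have ne: "(tM, dn tM) \<noteq> (tm, dp tm)" using dnp by auto
  have "card {(tM, dn tM), (tm, dp tm)} \<le> card (sb A v)"
    by (rule card_mono[OF finite_sb[OF assms(1)]]) (use 1 2 in auto)
  then show ?thesis using ne by simp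
qed

lemma upper: assumes "finite A" "conv A" shows "card (sb A v) \<le> 2"
proof (cases "v \<in> c ` A")
  case False
  then have "sb A v = {}" by (auto simp: sb_def bd_def)
  then show ?thesis by simp
next
  case True
  obtain tM tm where h: "tM \<in> A" "c tM = v" "\<And>t. t \<in> A \<Longrightarrow> c t = v \<Longrightarrow> pos t \<le> pos tM"
    "tm \<in> A" "c tm = v" "\<And>t. t \<in> A \<Longrightarrow> c t = v \<Longrightarrow> pos tm \<le> pos t"
    using ext_tiles[OF assms(1) True] by blast
  have "sb A v \<subseteq> {(tM, dn tM), (tm, dp tm)}"
  proof (rule subsetI)
    fix p assume p: "p \<in> sb A v"
    obtain t d where td: "p = (t,d)" by (cases p) auto
    have t: "t \<in> A" "c t = v" "d \<in> D" "nb d t \<notin> A" using p td by (auto simp: sb_def bd_def)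
    have "d = dn t \<or> d = dp t" using t(3) D[of t] by auto
    then show "p \<in> {(tM, dn tM), (tm, dp tm)}"
    proof
      assume d: "d = dn t"
      have "pos t = pos tM"
      proof (rule ccontr)
        assume "pos t \<noteq> pos tM"
        then have lt: "pos t < pos tM" using h(3)[OF t(1,2)] by simp
        have "nb (dn t) t \<in> A"
          using assms(2)[unfolded conv_def, rule_format, of t tM "nb (dn t) t"] t h(1,2) cn pn lt by simp
        then show False using t(4) d by simp
      qed
      then have "t = tM" using inj h(2) t(2) by simp
      then show ?thesis using td d by simp
    next
      assume d: "d = dp t"
      have "pos t = pos tm"
      proof (rule ccontr)
        assume "pos t \<noteq> pos tm"
        then have lt: "pos tm < pos t" using h(6)[OF t(1,2)] by simp
        have "nb (dp t) t \<in> A"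
          using assms(2)[unfolded conv_def, rule_format, of tm t "nb (dp t) t"] t h(4,5) cp pp lt by simp
        then show False using t(4) d by simp
      qed
      then have "t = tm" using inj h(5) t(2) by simp
      then show ?thesis using td d by simp
    qed
  qed
  then have "card (sb A v) \<le> card {(tM, dn tM), (tm, dp tm)}" by (rule card_mono[rotated]) simp
  also have "\<dots> \<le> 2" by (simp add: card_insert_if)
  finally show ?thesis .
qed

lemma sum_sb: assumes "finite A" shows "card {(t,d). (t,d) \<in> bd A \<and> d \<in> D} = (\<Sum>v\<in>c ` A. card (sb A v))"
proof -
  have "{(t,d). (t,d) \<in> bd A \<and> d \<in> D} = (\<Union>v\<in>c ` A. sb A v)"
    unfolding sb_def by (auto dest: bd_mem)
  moreover have "card (\<Union>v\<in>c ` A. sb A v) = (\<Sum>v\<in>c ` A. card (sb A v))"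
  proof (rule card_UN_disjoint)
    show "finite (c ` A)" using assms by simp
    show "\<forall>v\<in>c ` A. finite (sb A v)" using finite_sb[OF assms] by simp
    show "\<forall>v\<in>c ` A. \<forall>w\<in>c ` A. v \<noteq> w \<longrightarrow> sb A v \<inter> sb A w = {}"
      unfolding sb_def by blast
  qed
  ultimately show ?thesis by simp
qed

lemma strip_lower: assumes "finite A" shows "2 * card (c ` A) \<le> card {(t,d). (t,d) \<in> bd A \<and> d \<in> D}"
proof -
  have "card (c ` A) * 2 \<le> (\<Sum>v\<in>c ` A. card (sb A v))"
    using sum_bounded_below[of "c ` A" 2 "\<lambda>v. card (sb A v)"] lower[OF assms] by simp
  then show ?thesis using sum_sb[OF assms] by simp
qed

lemma strip_upper: assumes "finite A" "conv A" shows "card {(t,d). (t,d) \<in> bd A \<and> d \<in> D} \<le> 2 * card (c ` A)"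
proof -
  have "(\<Sum>v\<in>c ` A. card (sb A v)) \<le> card (c ` A) * 2"
    using sum_bounded_above[of "c ` A" "\<lambda>v. card (sb A v)" 2] upper[OF assms] by simp
  then show ?thesis using sum_sb[OF assms(1)] by simp
qed

end


definition posx :: "tile \<Rightarrow> int" where "posx t = 2 * yc t + (if tup t then 0 else 1)"
definition posy :: "tile \<Rightarrow> int" where "posy t = 2 * xc t + (if tup t then 0 else 1)"
definition dnx :: "tile \<Rightarrow> nat" where "dnx t = (if tup t then 2 else 0)"
definition dpx :: "tile \<Rightarrow> nat" where "dpx t = (if tup t then 0 else 2)"
definition dny :: "tile \<Rightarrow> nat" where "dny t = (if tup t then 2 else 1)"
definition dpy :: "tile \<Rightarrow> nat" where "dpy t = (if tup t then 1 else 2)"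
definition dnz :: "tile \<Rightarrow> nat" where "dnz t = (if tup t then 1 else 0)"
definition dpz :: "tile \<Rightarrow> nat" where "dpz t = (if tup t then 0 else 1)"

interpretation sx: strip xc posx dnx dpx "{0,2}"
  apply unfold_locales apply (auto simp: posx_def dnx_def dpx_def nb.simps split: prod.splits if_splits) apply presburger+ done

interpretation sy: strip yc posy dny dpy "{1,2}"
  apply unfold_locales apply (auto simp: posy_def dny_def dpy_def nb.simps split: prod.splits if_splits) apply presburger+ done

interpretation sz: strip zc posx dnz dpz "{0,1}"
  apply unfold_locales apply (auto simp: posx_def dnz_def dpz_def nb.simps split: prod.splits if_splits) apply presburger+ done

definition Bs :: "tile set \<Rightarrow> nat set \<Rightarrow> (tile \<times> nat) set" where
  "Bs A P = {(t,d). (t,d) \<in> bd A \<and> d \<in> P}"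

lemma card_Bs2: assumes "finite A" "i \<noteq> j"
  shows "card (Bs A {i,j}) = card (Bs A {i}) + card (Bs A {j})"
proof -
  have "Bs A {i,j} = Bs A {i} \<union> Bs A {j}" by (auto simp: Bs_def)
  moreover have "Bs A {i} \<inter> Bs A {j} = {}" using assms(2) by (auto simp: Bs_def)
  moreover have "finite (Bs A {i})" "finite (Bs A {j})"
    by (rule finite_subset[OF _ finite_bd[OF assms(1)]], auto simp: Bs_def)+
  ultimately show ?thesis by (simp add: card_Un_disjoint)
qed

lemma card_bd3: assumes "finite A"
  shows "card (bd A) = card (Bs A {0}) + card (Bs A {1}) + card (Bs A {2})"
proof -
  have "bd A = Bs A {0,1} \<union> Bs A {2}" by (auto simp: Bs_def bd_def less3)
  moreover have "Bs A {0,1} \<inter> Bs A {2} = {}" by (auto simp: Bs_def)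
  moreover have "finite (Bs A {0,1})" "finite (Bs A {2})"
    by (rule finite_subset[OF _ finite_bd[OF assms(1)]], auto simp: Bs_def)+
  ultimately show ?thesis using card_Bs2[OF assms, of 0 1] by (simp add: card_Un_disjoint)
qed

lemma perim_lower: assumes "finite A"
  shows "card (xc ` A) + card (yc ` A) + card (zc ` A) \<le> perimeter A"
proof -
  have "2 * card (xc ` A) \<le> card (Bs A {0,2})" using sx.strip_lower[OF assms] by (simp add: Bs_def)
  moreover have "2 * card (yc ` A) \<le> card (Bs A {1,2})" using sy.strip_lower[OF assms] by (simp add: Bs_def)
  moreover have "2 * card (zc ` A) \<le> card (Bs A {0,1})" using sz.strip_lower[OF assms] by (simp add: Bs_def)
  ultimately show ?thesis using card_Bs2[OF assms] card_bd3[OF assms] perim_bd[OF assms] by simp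
qed

lemma perim_upper: assumes "finite A" "sx.conv A" "sy.conv A" "sz.conv A"
  shows "perimeter A \<le> card (xc ` A) + card (yc ` A) + card (zc ` A)"
proof -
  have "card (Bs A {0,2}) \<le> 2 * card (xc ` A)" using sx.strip_upper[OF assms(1,2)] by (simp add: Bs_def)
  moreover have "card (Bs A {1,2}) \<le> 2 * card (yc ` A)" using sy.strip_upper[OF assms(1,3)] by (simp add: Bs_def)
  moreover have "card (Bs A {0,1}) \<le> 2 * card (zc ` A)" using sz.strip_upper[OF assms(1,4)] by (simp add: Bs_def)
  ultimately show ?thesis using card_Bs2[OF assms(1)] card_bd3[OF assms(1)] perim_bd[OF assms(1)] by simp
qed


declare xc.simps[simp] yc.simps[simp] zc.simps[simp] tup.simps[simp]

definition Tri0 :: "nat \<Rightarrow> tile set" where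
  "Tri0 m = {t. 0 \<le> xc t \<and> 0 \<le> yc t \<and> zc t < int m}"

definition Lay :: "nat \<Rightarrow> tile set" where
  "Lay m = {t. 0 \<le> xc t \<and> 0 \<le> yc t \<and> zc t = int m}"

lemma Tri0_sub: "Tri0 m \<subseteq> {0..int m} \<times> {0..int m} \<times> UNIV"
  by (auto simp: Tri0_def split: if_splits)

lemma finite_Tri0: "finite (Tri0 m)"
  by (rule finite_subset[OF Tri0_sub]) simp

lemma Lay_eq: "Lay m = (\<lambda>i. (i, int m - i, True)) ` {0..int m} \<union> (\<lambda>i. (i, int m - 1 - i, False)) ` {0..int m - 1}"
proof
  show "Lay m \<subseteq> (\<lambda>i. (i, int m - i, True)) ` {0..int m} \<union> (\<lambda>i. (i, int m - 1 - i, False)) ` {0..int m - 1}"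
  proof
    fix t assume "t \<in> Lay m"
    then obtain a b u where t: "t = (a,b,u)" "0 \<le> a" "0 \<le> b" "a + b + (if u then 0 else 1) = int m"
      by (cases t) (auto simp: Lay_def)
    show "t \<in> (\<lambda>i. (i, int m - i, True)) ` {0..int m} \<union> (\<lambda>i. (i, int m - 1 - i, False)) ` {0..int m - 1}"
    proof (cases u)
      case True
      then have "t = (\<lambda>i. (i, int m - i, True)) a" "a \<in> {0..int m}" using t by auto
      then show ?thesis by blast
    next
      case False
      then have "t = (\<lambda>i. (i, int m - 1 - i, False)) a" "a \<in> {0..int m - 1}" using t by auto
      then show ?thesis by blast
    qed
  qed
  show "(\<lambda>i. (i, int m - i, True)) ` {0..int m} \<union> (\<lambda>i. (i, int m - 1 - i, False)) ` {0..int m - 1} \<subseteq> Lay m"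
    by (auto simp: Lay_def)
qed

lemma card_Lay: "card (Lay m) = 2 * m + 1"
proof -
  have d: "(\<lambda>i. (i, int m - i, True)) ` {0..int m} \<inter> (\<lambda>i. (i, int m - 1 - i, False)) ` {0..int m - 1} = {}"
    by auto
  have c1: "card ((\<lambda>i. (i, int m - i, True)) ` {0..int m}) = m + 1"
    by (subst card_image) (auto simp: inj_on_def)
  have c2: "card ((\<lambda>i. (i, int m - 1 - i, False)) ` {0..int m - 1}) = m"
    by (subst card_image) (auto simp: inj_on_def)
  show ?thesis unfolding Lay_eq by (subst card_Un_disjoint) (use d c1 c2 in auto)
qed

lemma card_Tri0: "card (Tri0 m) = m * m"
proof (induction m)
  case 0
  have "Tri0 0 = {}" by (auto simp: Tri0_def)
  then show ?case by simp
next
  case (Suc m)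
  have e: "Tri0 (Suc m) = Tri0 m \<union> Lay m" by (auto simp: Tri0_def Lay_def)
  have d: "Tri0 m \<inter> Lay m = {}" by (auto simp: Tri0_def Lay_def)
  have fL: "finite (Lay m)" unfolding Lay_eq by simp
  have "card (Tri0 (Suc m)) = card (Tri0 m) + card (Lay m)"
    unfolding e by (rule card_Un_disjoint[OF finite_Tri0 fL d])
  then show ?case using Suc card_Lay by simp
qed

definition Tri :: "int \<Rightarrow> int \<Rightarrow> int \<Rightarrow> tile set" where
  "Tri a b c = {t. a \<le> xc t \<and> b \<le> yc t \<and> zc t \<le> c}"

fun shft :: "int \<Rightarrow> int \<Rightarrow> tile \<Rightarrow> tile" where "shft a b (x,y,u) = (x+a, y+b, u)"

lemma Tri_shift: assumes "c - a - b + 1 \<ge> 0"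
  shows "Tri a b c = shft a b ` Tri0 (nat (c - a - b + 1))"
proof
  show "Tri a b c \<subseteq> shft a b ` Tri0 (nat (c - a - b + 1))"
  proof
    fix t assume "t \<in> Tri a b c"
    then obtain x y u where t: "t = (x,y,u)" "a \<le> x" "b \<le> y" "x + y + (if u then 0 else 1) \<le> c"
      by (cases t) (auto simp: Tri_def)
    have "t = shft a b (x - a, y - b, u)" using t by simp
    moreover have "(x - a, y - b, u) \<in> Tri0 (nat (c - a - b + 1))" using t assms by (auto simp: Tri0_def)
    ultimately show "t \<in> shft a b ` Tri0 (nat (c - a - b + 1))" by blast
  qed
  show "shft a b ` Tri0 (nat (c - a - b + 1)) \<subseteq> Tri a b c"
    using assms by (auto simp: Tri0_def Tri_def)
qed

lemma finite_Tri: "finite (Tri a b c)"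
proof (cases "c - a - b + 1 \<ge> 0")
  case True then show ?thesis using Tri_shift finite_Tri0 by simp
next
  case False
  then have "Tri a b c = {}" by (auto simp: Tri_def)
  then show ?thesis by simp
qed

lemma card_Tri: assumes "c - a - b + 1 \<ge> 0"
  shows "int (card (Tri a b c)) = (c - a - b + 1)^2"
proof -
  have "inj (shft a b)" by (rule injI) (auto elim: shft.elims)
  then have "card (Tri a b c) = card (Tri0 (nat (c - a - b + 1)))"
    unfolding Tri_shift[OF assms] by (simp add: card_image inj_on_subset)
  then show ?thesis using card_Tri0 assms by (simp add: power2_eq_square)
qed


definition Box :: "int \<Rightarrow> int \<Rightarrow> int \<Rightarrow> int \<Rightarrow> int \<Rightarrow> int \<Rightarrow> tile set" where
  "Box x0 x1 y0 y1 z0 z1 = {t. x0 \<le> xc t \<and> xc t \<le> x1 \<and> y0 \<le> yc t \<and> yc t \<le> y1 \<and> z0 \<le> zc t \<and> zc t \<le> z1}"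

lemma zc_ge: "xc t + yc t \<le> zc t" "zc t \<le> xc t + yc t + 1"
  by (cases t; auto)+

lemma box_card:
  assumes a1: "z1 - x1 - y0 \<ge> 0" and a2: "z1 - x0 - y1 \<ge> 0" and a3: "z0 - x0 - y0 \<ge> 0"
    and d12: "z1 \<le> x1 + y1 + 1" and d13: "z0 \<le> x1 + y0 + 1" and d23: "z0 \<le> x0 + y1 + 1"
    and w: "x0 \<le> x1 + 1" "y0 \<le> y1 + 1" "z0 \<le> z1 + 1"
  shows "int (card (Box x0 x1 y0 y1 z0 z1)) =
    (z1 - x0 - y0 + 1)^2 - (z1 - x1 - y0)^2 - (z1 - x0 - y1)^2 - (z0 - x0 - y0)^2"
proof -
  let ?T = "Tri x0 y0 z1" and ?C1 = "Tri (x1+1) y0 z1" and ?C2 = "Tri x0 (y1+1) z1" and ?C3 = "Tri x0 y0 (z0-1)"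
  have e: "Box x0 x1 y0 y1 z0 z1 = ?T - (?C1 \<union> ?C2 \<union> ?C3)"
    by (auto simp: Box_def Tri_def)
  have sub: "?C1 \<union> ?C2 \<union> ?C3 \<subseteq> ?T" using w by (auto simp: Tri_def)
  have d1: "?C1 \<inter> ?C2 = {}" using d12 zc_ge by (auto simp: Tri_def) (smt (verit))
  have d2: "(?C1 \<union> ?C2) \<inter> ?C3 = {}" using d13 d23 zc_ge by (auto simp: Tri_def) (smt (verit))+
  have "card (?C1 \<union> ?C2 \<union> ?C3) = card ?C1 + card ?C2 + card ?C3"
    using d1 d2 finite_Tri by (simp add: card_Un_disjoint)
  moreover have "card (?T - (?C1 \<union> ?C2 \<union> ?C3)) = card ?T - card (?C1 \<union> ?C2 \<union> ?C3)"
    by (rule card_Diff_subset[OF _ sub]) (simp add: finite_Tri)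
  moreover have "card (?C1 \<union> ?C2 \<union> ?C3) \<le> card ?T"
    by (rule card_mono[OF finite_Tri sub])
  moreover have "int (card ?T) = (z1 - x0 - y0 + 1)^2" using card_Tri[of z1 x0 y0] a3 w by simp
  moreover have "int (card ?C1) = (z1 - x1 - y0)^2" using card_Tri[of z1 "x1+1" y0] a1 by simp
  moreover have "int (card ?C2) = (z1 - x0 - y1)^2" using card_Tri[of z1 x0 "y1+1"] a2 by simp
  moreover have "int (card ?C3) = (z0 - x0 - y0)^2" using card_Tri[of "z0-1" x0 y0] a3 by simp
  ultimately show ?thesis unfolding e by simp
qed


definition arel :: "tile set \<Rightarrow> (tile \<times> tile) set" where
  "arel A = {(x, y). x \<in> A \<and> y \<in> A \<and> tiles_adjacent x y}"

lemma polyiamond_iff: "polyiamond A \<longleftrightarrow> finite A \<and> A \<noteq> {} \<and> (\<forall>s\<in>A. \<forall>t\<in>A. (s, t) \<in> (arel A)\<^sup>*)"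
  unfolding polyiamond_def arel_def by simp

lemma adj_coord: assumes "tiles_adjacent s t"
  shows "\<bar>xc t - xc s\<bar> \<le> 1" "\<bar>yc t - yc s\<bar> \<le> 1" "\<bar>zc t - zc s\<bar> \<le> 1"
proof -
  obtain d where "d < 3" "t = nb d s" using assms adj_nb by blast
  then show "\<bar>xc t - xc s\<bar> \<le> 1" "\<bar>yc t - yc s\<bar> \<le> 1" "\<bar>zc t - zc s\<bar> \<le> 1"
    by (cases s; auto simp: less3 nb.simps)+
qed

lemma interval_step:
  assumes f: "\<And>a b. tiles_adjacent a b \<Longrightarrow> \<bar>f b - f a\<bar> \<le> (1::int)"
    and st: "(s, t) \<in> (arel A)\<^sup>*" and s: "s \<in> A"
  shows "\<forall>v. (f s \<le> v \<and> v \<le> f t \<or> f t \<le> v \<and> v \<le> f s) \<longrightarrow> (\<exists>r\<in>A. f r = v)"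
  using st
proof (induction rule: rtrancl_induct)
  case base
  then show ?case using s by auto
next
  case (step m t)
  then have "m \<in> A" "t \<in> A" "\<bar>f t - f m\<bar> \<le> 1" using f by (auto simp: arel_def)
  show ?case
  proof (intro allI impI)
    fix v assume v: "f s \<le> v \<and> v \<le> f t \<or> f t \<le> v \<and> v \<le> f s"
    show "\<exists>r\<in>A. f r = v"
    proof (cases "f s \<le> v \<and> v \<le> f m \<or> f m \<le> v \<and> v \<le> f s")
      case True
      then show ?thesis using step.IH by blast
    next
      case False
      then have "v = f t" using v \<open>\<bar>f t - f m\<bar> \<le> 1\<close> by linarith
      then show ?thesis using \<open>t \<in> A\<close> by blast
    qed
  qed
qed

lemma proj_interval:
  assumes P: "polyiamond A" and f: "\<And>a b. tiles_adjacent a b \<Longrightarrow> \<bar>f b - f a\<bar> \<le> (1::int)"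
  shows "f ` A = {Min (f ` A) .. Max (f ` A)}"
proof -
  have fin: "finite (f ` A)" and ne: "f ` A \<noteq> {}" using P by (auto simp: polyiamond_iff)
  obtain s where s: "s \<in> A" "f s = Min (f ` A)" using Min_in[OF fin ne] by auto
  obtain t where t: "t \<in> A" "f t = Max (f ` A)" using Max_in[OF fin ne] by auto
  have "(s, t) \<in> (arel A)\<^sup>*" using P s t by (auto simp: polyiamond_iff)
  from interval_step[OF f this s(1)] s t
  have "\<forall>v. Min (f ` A) \<le> v \<and> v \<le> Max (f ` A) \<longrightarrow> (\<exists>r\<in>A. f r = v)" by auto
  then show ?thesis using fin by (auto intro: Min_le Max_ge)
qed

lemma card_proj:
  assumes P: "polyiamond A" and f: "\<And>a b. tiles_adjacent a b \<Longrightarrow> \<bar>f b - f a\<bar> \<le> (1::int)"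
  shows "int (card (f ` A)) = Max (f ` A) - Min (f ` A) + 1"
proof -
  have fin: "finite (f ` A)" and ne: "f ` A \<noteq> {}" using P by (auto simp: polyiamond_iff)
  have "Min (f ` A) \<le> Max (f ` A)" using fin ne by simp
  moreover have "card (f ` A) = nat (Max (f ` A) - Min (f ` A) + 1)"
    using arg_cong[where f=card, OF proj_interval[OF P f]] by (simp only: card_atLeastAtMost_int)
  ultimately show ?thesis by simp
qed

lemma iso_ineq:
  fixes T a b g :: int
  shows "6 * (T^2 - a^2 - b^2 - g^2) \<le> (3*T - a - b - g)^2"
proof -
  have "(3*T - a - b - g)^2 - 6 * (T^2 - a^2 - b^2 - g^2) = 3*(T - a - b - g)^2 + 2*((a-b)^2 + (b-g)^2 + (g-a)^2)"
    by (simp add: power2_eq_square algebra_simps)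
  moreover have "0 \<le> 3*(T - a - b - g)^2 + 2*((a-b)^2 + (b-g)^2 + (g-a)^2)" by simp
  ultimately show ?thesis by linarith
qed

lemma chain3: "(a::int) \<le> n \<Longrightarrow> 6 * n \<le> s \<Longrightarrow> s \<le> p \<Longrightarrow> 6 * a \<le> p" by linarith

theorem isoperimetric:
  assumes P: "polyiamond A"
  shows "6 * card A \<le> (perimeter A)^2"
proof -
  have fin: "finite A" and ne: "A \<noteq> {}" using P by (auto simp: polyiamond_iff)
  define x0 where "x0 = Min (xc ` A)"
  define x1 where "x1 = Max (xc ` A)"
  define y0 where "y0 = Min (yc ` A)"
  define y1 where "y1 = Max (yc ` A)"
  define z0 where "z0 = Min (zc ` A)"
  define z1 where "z1 = Max (zc ` A)"
  have fx: "finite (xc ` A)" "xc ` A \<noteq> {}" and fy: "finite (yc ` A)" "yc ` A \<noteq> {}"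
    and fz: "finite (zc ` A)" "zc ` A \<noteq> {}" using fin ne by auto
  have bx: "\<And>t. t \<in> A \<Longrightarrow> x0 \<le> xc t \<and> xc t \<le> x1" unfolding x0_def x1_def using fx by auto
  have by': "\<And>t. t \<in> A \<Longrightarrow> y0 \<le> yc t \<and> yc t \<le> y1" unfolding y0_def y1_def using fy by auto
  have bz: "\<And>t. t \<in> A \<Longrightarrow> z0 \<le> zc t \<and> zc t \<le> z1" unfolding z0_def z1_def using fz by auto
  obtain tx0 where tx0: "tx0 \<in> A" "xc tx0 = x0" using Min_in[OF fx] unfolding x0_def by auto
  obtain tx1 where tx1: "tx1 \<in> A" "xc tx1 = x1" using Max_in[OF fx] unfolding x1_def by auto
  obtain ty0 where ty0: "ty0 \<in> A" "yc ty0 = y0" using Min_in[OF fy] unfolding y0_def by auto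
  obtain ty1 where ty1: "ty1 \<in> A" "yc ty1 = y1" using Max_in[OF fy] unfolding y1_def by auto
  obtain tz0 where tz0: "tz0 \<in> A" "zc tz0 = z0" using Min_in[OF fz] unfolding z0_def by auto
  obtain tz1 where tz1: "tz1 \<in> A" "zc tz1 = z1" using Max_in[OF fz] unfolding z1_def by auto
  have a1: "z1 - x1 - y0 \<ge> 0" using zc_ge[of tx1] bz[OF tx1(1)] by' [OF tx1(1)] tx1 by linarith
  have a2: "z1 - x0 - y1 \<ge> 0" using zc_ge[of ty1] bz[OF ty1(1)] bx[OF ty1(1)] ty1 by linarith
  have a3: "z0 - x0 - y0 \<ge> 0" using zc_ge[of tz0] bx[OF tz0(1)] by'[OF tz0(1)] tz0 by linarith
  have d12: "z1 \<le> x1 + y1 + 1" using zc_ge[of tz1] bx[OF tz1(1)] by'[OF tz1(1)] tz1 by linarith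
  have d13: "z0 \<le> x1 + y0 + 1" using zc_ge[of ty0] bx[OF ty0(1)] bz[OF ty0(1)] ty0 by linarith
  have d23: "z0 \<le> x0 + y1 + 1" using zc_ge[of tx0] by'[OF tx0(1)] bz[OF tx0(1)] tx0 by linarith
  have w1: "x0 \<le> x1 + 1" using bx[OF tx0(1)] by linarith
  have w2: "y0 \<le> y1 + 1" using by'[OF tx0(1)] by linarith
  have w3: "z0 \<le> z1 + 1" using bz[OF tx0(1)] by linarith
  note w = w1 w2 w3
  have sub: "A \<subseteq> Box x0 x1 y0 y1 z0 z1" using bx by' bz by (auto simp: Box_def)
  have fB: "finite (Box x0 x1 y0 y1 z0 z1)"
    by (rule finite_subset[OF _ finite_Tri[of x0 y0 z1]]) (auto simp: Box_def Tri_def)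
  have "card A \<le> card (Box x0 x1 y0 y1 z0 z1)" by (rule card_mono[OF fB sub])
  then have N: "int (card A) \<le> (z1 - x0 - y0 + 1)^2 - (z1 - x1 - y0)^2 - (z1 - x0 - y1)^2 - (z0 - x0 - y0)^2"
    using box_card[OF a1 a2 a3 d12 d13 d23 w] by linarith
  have cx: "int (card (xc ` A)) = x1 - x0 + 1"
    unfolding x0_def x1_def by (rule card_proj[OF P]) (rule adj_coord)
  have cy: "int (card (yc ` A)) = y1 - y0 + 1"
    unfolding y0_def y1_def by (rule card_proj[OF P]) (rule adj_coord)
  have cz: "int (card (zc ` A)) = z1 - z0 + 1"
    unfolding z0_def z1_def by (rule card_proj[OF P]) (rule adj_coord)
  have p: "int (card (xc ` A)) + int (card (yc ` A)) + int (card (zc ` A)) \<le> int (perimeter A)"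
    using perim_lower[OF fin] by linarith
  define T where "T = z1 - x0 - y0 + 1"
  have S: "int (card (xc ` A)) + int (card (yc ` A)) + int (card (zc ` A)) =
      3*T - (z1 - x1 - y0) - (z1 - x0 - y1) - (z0 - x0 - y0)"
    using cx cy cz unfolding T_def by simp
  have I: "6 * (T^2 - (z1 - x1 - y0)^2 - (z1 - x0 - y1)^2 - (z0 - x0 - y0)^2) \<le> (3*T - (z1 - x1 - y0) - (z1 - x0 - y1) - (z0 - x0 - y0))^2"
    by (rule iso_ineq)
  have Sp: "0 \<le> 3*T - (z1 - x1 - y0) - (z1 - x0 - y1) - (z0 - x0 - y0)" using S by linarith
  have "(3*T - (z1 - x1 - y0) - (z1 - x0 - y1) - (z0 - x0 - y0))^2 \<le> (int (perimeter A))^2"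
    by (rule power_mono) (use p S Sp in linarith)+
  then have "6 * int (card A) \<le> (int (perimeter A))^2" by (rule chain3[OF N[folded T_def] I])
  then have "int (6 * card A) \<le> int ((perimeter A)^2)" by simp
  then show ?thesis by (simp only: of_nat_le_iff)
qed


lemma adj_sym: "tiles_adjacent s t \<Longrightarrow> tiles_adjacent t s"
  unfolding tiles_adjacent_def by auto

lemma arel_sym: "(arel A)\<inverse> = arel A"
  by (auto simp: arel_def adj_sym)

lemma rt_sym: "(s, t) \<in> (arel A)\<^sup>* \<Longrightarrow> (t, s) \<in> (arel A)\<^sup>*"
proof -
  assume "(s, t) \<in> (arel A)\<^sup>*"
  then have "(t, s) \<in> ((arel A)\<inverse>)\<^sup>*" by (simp add: rtrancl_converse)
  then show ?thesis by (simp add: arel_sym)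
qed

lemma arel_mono: "A \<subseteq> B \<Longrightarrow> (arel A)\<^sup>* \<subseteq> (arel B)\<^sup>*"
  by (rule rtrancl_mono) (auto simp: arel_def)

lemma poly_insert: assumes P: "polyiamond A" and s: "s \<in> A" and adj: "tiles_adjacent s u"
  shows "polyiamond (insert u A)"
proof -
  have fin: "finite A" "A \<noteq> {}" and conn: "\<forall>a\<in>A. \<forall>b\<in>A. (a, b) \<in> (arel A)\<^sup>*" using P by (auto simp: polyiamond_iff)
  have m: "(arel A)\<^sup>* \<subseteq> (arel (insert u A))\<^sup>*" by (rule arel_mono) auto
  have su: "(s, u) \<in> (arel (insert u A))\<^sup>*" using s adj by (auto simp: arel_def)
  have us: "(u, s) \<in> (arel (insert u A))\<^sup>*" using rt_sym[OF su] .
  have "\<forall>a\<in>insert u A. (a, s) \<in> (arel (insert u A))\<^sup>*"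
  proof
    fix a assume "a \<in> insert u A"
    then show "(a, s) \<in> (arel (insert u A))\<^sup>*"
    proof
      assume "a = u" then show ?thesis using us by simp
    next
      assume "a \<in> A" then have "(a, s) \<in> (arel A)\<^sup>*" using conn s by blast
      then show ?thesis using m by (rule subsetD[rotated])
    qed
  qed
  then have "\<forall>a\<in>insert u A. \<forall>b\<in>insert u A. (a, b) \<in> (arel (insert u A))\<^sup>*"
  proof (intro ballI)
    fix a b assume h: "\<forall>a\<in>insert u A. (a, s) \<in> (arel (insert u A))\<^sup>*" "a \<in> insert u A" "b \<in> insert u A"
    then have "(a, s) \<in> (arel (insert u A))\<^sup>*" "(b, s) \<in> (arel (insert u A))\<^sup>*" by auto
    then show "(a, b) \<in> (arel (insert u A))\<^sup>*" using rt_sym rtrancl_trans by fast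
  qed
  then show ?thesis using fin by (simp add: polyiamond_iff)
qed

lemma perim_parity: "finite A \<Longrightarrow> even (perimeter A + card A)"
  using bd_parity perim_bd by simp

lemma extend:
  assumes P: "polyiamond A"
  shows "\<exists>u. u \<notin> A \<and> polyiamond (insert u A) \<and> perimeter (insert u A) \<le> perimeter A + 1"
proof -
  have fin: "finite A" and ne: "A \<noteq> {}" using P by (auto simp: polyiamond_iff)
  obtain s where s: "s \<in> A" using ne by auto
  obtain tM tm where h: "tM \<in> A" "xc tM = xc s" "\<And>t. t \<in> A \<Longrightarrow> xc t = xc s \<Longrightarrow> posx t \<le> posx tM"
    "tm \<in> A" "xc tm = xc s" "\<And>t. t \<in> A \<Longrightarrow> xc t = xc s \<Longrightarrow> posx tm \<le> posx t"
    by (rule sx.ext_tiles[OF fin imageI[OF s]], rule that, assumption+)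
  define u where "u = nb (dnx tM) tM"
  have d3: "dnx tM < 3" by (rule sx.dn3)
  have uA: "u \<notin> A"
  proof
    assume "u \<in> A"
    moreover have "xc u = xc s" using h(2) sx.cn unfolding u_def by simp
    ultimately have "posx u \<le> posx tM" using h(3) by blast
    then show False using sx.pn unfolding u_def by simp
  qed
  have bk: "nb (dnx tM) u = tM" unfolding u_def by (rule nb_nb[OF d3])
  have adj: "tiles_adjacent tM u" unfolding u_def using d3 adj_nb by blast
  have J: "1 \<le> card {d. d < 3 \<and> nb d u \<in> A}"
  proof -
    have "dnx tM \<in> {d. d < 3 \<and> nb d u \<in> A}" using d3 bk h(1) by simp
    moreover have "finite {d. d < 3 \<and> nb d u \<in> A}" by simp
    ultimately have "card {d. d < 3 \<and> nb d u \<in> A} > 0" by (auto simp: card_gt_0_iff)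
    then show ?thesis by simp
  qed
  have "int (perimeter (insert u A)) = int (perimeter A) + 3 - 2 * int (card {d. d < 3 \<and> nb d u \<in> A})"
    using bd_insert[OF fin uA] perim_bd[OF fin] perim_bd[of "insert u A"] fin by simp
  then have "perimeter (insert u A) \<le> perimeter A + 1" using J by linarith
  moreover have "polyiamond (insert u A)" by (rule poly_insert[OF P h(1) adj])
  ultimately show ?thesis using uA by blast
qed


lemma Mmono: "(0::int) \<le> K \<Longrightarrow> b1 < b2 \<Longrightarrow> K * b1 + K \<le> K * b2"
proof -
  assume "0 \<le> K" "b1 < b2"
  then have "K * (b1 + 1) \<le> K * b2" by (intro mult_left_mono) auto
  then show ?thesis by (simp add: algebra_simps)
qed

locale cons =
  fixes T al be ga :: int
  assumes T1: "T \<ge> 1" and nn: "al \<ge> 0" "be \<ge> 0" "ga \<ge> 0" and sm: "al + be + ga \<le> T"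
    and gT: "ga \<le> T - 1"
begin

definition M :: int where "M = 2 * T + 2"
definition R :: "tile set" where "R = Box 0 (T - al - 1) 0 (T - be - 1) ga (T - 1)"
definition ell :: "tile \<Rightarrow> int" where "ell t = M * yc t + 2 * xc t + (if tup t then 0 else 1)"
definition Q :: "int \<Rightarrow> tile set" where "Q j = {t \<in> R. ell t \<le> j}"

lemma M4: "M \<ge> 4" using T1 by (simp add: M_def)

lemma Meven: "M * b = 2 * ((T + 1) * b)" by (simp add: M_def algebra_simps)

lemma memR: "(a, b, u) \<in> R \<longleftrightarrow> 0 \<le> a \<and> a \<le> T - al - 1 \<and> 0 \<le> b \<and> b \<le> T - be - 1 \<and>
   ga \<le> a + b + (if u then 0 else 1) \<and> a + b + (if u then 0 else 1) \<le> T - 1"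
  by (simp add: R_def Box_def)

lemma memQ: "(a, b, u) \<in> Q j \<longleftrightarrow> (a, b, u) \<in> R \<and> M * b + 2 * a + (if u then 0 else 1) \<le> j"
  by (simp add: Q_def ell_def)

lemma finite_R: "finite R"
  by (rule finite_subset[OF _ finite_Tri[of 0 0 "T - 1"]]) (auto simp: R_def Box_def Tri_def)

lemma finite_Q: "finite (Q j)"
  by (rule finite_subset[OF _ finite_R]) (auto simp: Q_def)

lemma card_R: "int (card R) = T^2 - al^2 - be^2 - ga^2"
proof -
  have "int (card R) = (T - 1 - 0 - 0 + 1)^2 - (T - 1 - (T - al - 1) - 0)^2 - (T - 1 - 0 - (T - be - 1))^2 - (ga - 0 - 0)^2"
    unfolding R_def by (rule box_card) (use T1 nn sm gT in linarith)+
  then show ?thesis by simp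
qed

lemma ell_nonneg: "t \<in> R \<Longrightarrow> 0 \<le> ell t"
proof -
  assume "t \<in> R"
  then obtain a b u where t: "t = (a,b,u)" "0 \<le> a" "0 \<le> b" by (cases t) (auto simp: memR)
  have "0 \<le> M * b" using M4 t by simp
  then show ?thesis using t by (simp add: ell_def)
qed

lemma ell_le: "t \<in> R \<Longrightarrow> ell t \<le> M * T"
proof -
  assume "t \<in> R"
  then obtain a b u where t: "t = (a,b,u)" "0 \<le> a" "a \<le> T - al - 1" "b \<le> T - be - 1" by (cases t) (auto simp: memR)
  have "b < T" using t nn by linarith
  then have "M * b + M \<le> M * T" using Mmono[of M b T] M4 by simp
  then show ?thesis using t nn M4 unfolding M_def ell_def by simp
qed

lemma ell_inj: "s \<in> R \<Longrightarrow> t \<in> R \<Longrightarrow> ell s = ell t \<Longrightarrow> s = t"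
proof -
  assume s: "s \<in> R" and t: "t \<in> R" and e: "ell s = ell t"
  obtain a1 b1 u1 where s': "s = (a1,b1,u1)" by (cases s)
  obtain a2 b2 u2 where t': "t = (a2,b2,u2)" by (cases t)
  have r1: "0 \<le> a1" "a1 \<le> T - al - 1" using s s' by (auto simp: memR)
  have r2: "0 \<le> a2" "a2 \<le> T - al - 1" using t t' by (auto simp: memR)
  have e': "M * b1 + 2 * a1 + (if u1 then 0 else 1) = M * b2 + 2 * a2 + (if u2 then 0 else 1)"
    using e s' t' by (simp add: ell_def)
  have "b1 = b2"
  proof (rule ccontr)
    assume "b1 \<noteq> b2"
    then have "b1 < b2 \<or> b2 < b1" by auto
    then show False
    proof
      assume "b1 < b2" then have "M * b1 + M \<le> M * b2" using Mmono M4 by simp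
      then show False using e' r1 r2 nn unfolding M_def by (simp split: if_splits; linarith)
    next
      assume "b2 < b1" then have "M * b2 + M \<le> M * b1" using Mmono M4 by simp
      then show False using e' r1 r2 nn unfolding M_def by (simp split: if_splits; linarith)
    qed
  qed
  then have "2 * a1 + (if u1 then 0 else 1) = 2 * a2 + (if u2 then (0::int) else 1)" using e' by simp
  then have "a1 = a2 \<and> u1 = u2" by (simp split: if_splits; presburger)
  then show ?thesis using s' t' \<open>b1 = b2\<close> by simp
qed

end


context cons begin

lemma conv_y: "sy.conv (Q j)"
  unfolding sy.conv_def
proof (intro ballI allI impI)
  fix s t r assume s: "s \<in> Q j" and t: "t \<in> Q j" and c1: "yc s = yc r" and c2: "yc t = yc r"
    and p1: "posy s \<le> posy r" and p2: "posy r \<le> posy t"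
  obtain a1 b1 u1 where s': "s = (a1,b1,u1)" by (cases s)
  obtain a2 b2 u2 where t': "t = (a2,b2,u2)" by (cases t)
  obtain a b u where r': "r = (a,b,u)" by (cases r)
  define e1 :: int where "e1 = (if u1 then 0 else 1)"
  define e2 :: int where "e2 = (if u2 then 0 else 1)"
  define e :: int where "e = (if u then 0 else 1)"
  have eb: "0 \<le> e1" "e1 \<le> 1" "0 \<le> e2" "e2 \<le> 1" "0 \<le> e" "e \<le> 1" by (auto simp: e1_def e2_def e_def)
  have hs: "0 \<le> a1" "a1 \<le> T - al - 1" "0 \<le> b1" "b1 \<le> T - be - 1" "ga \<le> a1 + b1 + e1" "a1 + b1 + e1 \<le> T - 1"
    "M * b1 + 2 * a1 + e1 \<le> j" using s s' by (auto simp: memQ memR e1_def)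
  have ht: "0 \<le> a2" "a2 \<le> T - al - 1" "0 \<le> b2" "b2 \<le> T - be - 1" "ga \<le> a2 + b2 + e2" "a2 + b2 + e2 \<le> T - 1"
    "M * b2 + 2 * a2 + e2 \<le> j" using t t' by (auto simp: memQ memR e2_def)
  have bb: "b1 = b" "b2 = b" using c1 c2 s' t' r' by auto
  have q1: "2 * a1 + e1 \<le> 2 * a + e" using p1 s' r' by (simp add: posy_def e1_def e_def)
  have q2: "2 * a + e \<le> 2 * a2 + e2" using p2 t' r' by (simp add: posy_def e2_def e_def)
  have x1: "a1 \<le> a" "a1 + e1 \<le> a + e" using q1 eb by presburger+
  have x2: "a \<le> a2" "a + e \<le> a2 + e2" using q2 eb by presburger+
  have "(a, b, u) \<in> R" unfolding memR using hs ht x1 x2 bb by (simp add: e_def[symmetric])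
  moreover have "M * b + 2 * a + e \<le> j" using ht q2 bb by simp
  ultimately show "r \<in> Q j" using r' by (simp add: memQ e_def)
qed

lemma conv_x: "sx.conv (Q j)"
  unfolding sx.conv_def
proof (intro ballI allI impI)
  fix s t r assume s: "s \<in> Q j" and t: "t \<in> Q j" and c1: "xc s = xc r" and c2: "xc t = xc r"
    and p1: "posx s \<le> posx r" and p2: "posx r \<le> posx t"
  obtain a1 b1 u1 where s': "s = (a1,b1,u1)" by (cases s)
  obtain a2 b2 u2 where t': "t = (a2,b2,u2)" by (cases t)
  obtain a b u where r': "r = (a,b,u)" by (cases r)
  define e1 :: int where "e1 = (if u1 then 0 else 1)"
  define e2 :: int where "e2 = (if u2 then 0 else 1)"
  define e :: int where "e = (if u then 0 else 1)"
  have eb: "0 \<le> e1" "e1 \<le> 1" "0 \<le> e2" "e2 \<le> 1" "0 \<le> e" "e \<le> 1" by (auto simp: e1_def e2_def e_def)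
  have hs: "0 \<le> a1" "a1 \<le> T - al - 1" "0 \<le> b1" "b1 \<le> T - be - 1" "ga \<le> a1 + b1 + e1" "a1 + b1 + e1 \<le> T - 1"
    "M * b1 + 2 * a1 + e1 \<le> j" using s s' by (auto simp: memQ memR e1_def)
  have ht: "0 \<le> a2" "a2 \<le> T - al - 1" "0 \<le> b2" "b2 \<le> T - be - 1" "ga \<le> a2 + b2 + e2" "a2 + b2 + e2 \<le> T - 1"
    "M * b2 + 2 * a2 + e2 \<le> j" using t t' by (auto simp: memQ memR e2_def)
  have aa: "a1 = a" "a2 = a" using c1 c2 s' t' r' by auto
  have q1: "2 * b1 + e1 \<le> 2 * b + e" using p1 s' r' by (simp add: posx_def e1_def e_def)
  have q2: "2 * b + e \<le> 2 * b2 + e2" using p2 t' r' by (simp add: posx_def e2_def e_def)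
  have x1: "b1 \<le> b" "b1 + e1 \<le> b + e" using q1 eb by presburger+
  have x2: "b \<le> b2" "b + e \<le> b2 + e2" using q2 eb by presburger+
  have "(a, b, u) \<in> R" unfolding memR using hs ht x1 x2 aa by (simp add: e_def[symmetric])
  moreover have "M * b + 2 * a + e \<le> j"
  proof (cases "b < b2")
    case True
    then have "M * b + M \<le> M * b2" using Mmono M4 by simp
    then show ?thesis using ht aa eb M4 by linarith
  next
    case False
    then have "b = b2" "e \<le> e2" using x2 by auto
    then show ?thesis using ht aa by simp
  qed
  ultimately show "r \<in> Q j" using r' by (simp add: memQ e_def)
qed

lemma conv_z: assumes j: "even j" shows "sz.conv (Q j)"
  unfolding sz.conv_def
proof (intro ballI allI impI)
  fix s t r assume s: "s \<in> Q j" and t: "t \<in> Q j" and c1: "zc s = zc r" and c2: "zc t = zc r"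
    and p1: "posx s \<le> posx r" and p2: "posx r \<le> posx t"
  obtain a1 b1 u1 where s': "s = (a1,b1,u1)" by (cases s)
  obtain a2 b2 u2 where t': "t = (a2,b2,u2)" by (cases t)
  obtain a b u where r': "r = (a,b,u)" by (cases r)
  define e1 :: int where "e1 = (if u1 then 0 else 1)"
  define e2 :: int where "e2 = (if u2 then 0 else 1)"
  define e :: int where "e = (if u then 0 else 1)"
  have eb: "0 \<le> e1" "e1 \<le> 1" "0 \<le> e2" "e2 \<le> 1" "0 \<le> e" "e \<le> 1" by (auto simp: e1_def e2_def e_def)
  have hs: "0 \<le> a1" "a1 \<le> T - al - 1" "0 \<le> b1" "b1 \<le> T - be - 1" "ga \<le> a1 + b1 + e1" "a1 + b1 + e1 \<le> T - 1"
    "M * b1 + 2 * a1 + e1 \<le> j" using s s' by (auto simp: memQ memR e1_def)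
  have ht: "0 \<le> a2" "a2 \<le> T - al - 1" "0 \<le> b2" "b2 \<le> T - be - 1" "ga \<le> a2 + b2 + e2" "a2 + b2 + e2 \<le> T - 1"
    "M * b2 + 2 * a2 + e2 \<le> j" using t t' by (auto simp: memQ memR e2_def)
  have zz: "a1 + b1 + e1 = a + b + e" "a2 + b2 + e2 = a + b + e" using c1 c2 s' t' r' by (auto simp: e1_def e2_def e_def)
  have q1: "2 * b1 + e1 \<le> 2 * b + e" using p1 s' r' by (simp add: posx_def e1_def e_def)
  have q2: "2 * b + e \<le> 2 * b2 + e2" using p2 t' r' by (simp add: posx_def e2_def e_def)
  have x1: "b1 \<le> b" "b1 + e1 \<le> b + e" using q1 eb by presburger+
  have x2: "b \<le> b2" "b + e \<le> b2 + e2" using q2 eb by presburger+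
  have "(a, b, u) \<in> R" unfolding memR using hs ht x1 x2 zz by (simp add: e_def[symmetric])
  moreover have "M * b + 2 * a + e \<le> j"
  proof (cases "b < b2")
    case True
    then have "(M - 2) * b + (M - 2) \<le> (M - 2) * b2" using Mmono[of "M - 2" b b2] M4 by simp
    then have "M * b - 2 * b + M - 2 \<le> M * b2 - 2 * b2" by (simp add: algebra_simps)
    then show ?thesis using ht zz eb M4 by linarith
  next
    case False
    then have bb: "b = b2" "e \<le> e2" using x2 by auto
    show ?thesis
    proof (cases "e = e2")
      case True
      then show ?thesis using ht zz bb by simp
    next
      case False
      then have ee: "e = 0" "e2 = 1" using bb eb by auto
      obtain k where k: "M * b = 2 * k" using Meven by blast
      obtain m where m: "j = 2 * m" using j by (auto elim: evenE)
      have "2 * k + 2 * a2 + 1 \<le> 2 * m" using ht(7) k m bb ee by simp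
      then have "2 * k + 2 * a2 + 2 \<le> 2 * m" by presburger
      moreover have "a = a2 + 1" using zz bb ee by simp
      ultimately show ?thesis using k m ee by simp
    qed
  qed
  ultimately show "r \<in> Q j" using r' by (simp add: memQ e_def)
qed

end


lemma adj1: "tiles_adjacent (a,b,True) (a-1,b,False)"
  unfolding adj_nb by (rule exI[of _ 1]) (simp add: nb.simps)
lemma adj2: "tiles_adjacent (a,b,True) (a,b-1,False)"
  unfolding adj_nb by (rule exI[of _ 0]) (simp add: nb.simps)
lemma adj3: "tiles_adjacent (a,b,False) (a,b,True)"
  unfolding adj_nb by (rule exI[of _ 2]) (simp add: nb.simps)
lemma adj4: "tiles_adjacent (a,b,False) (a+1,b,True)"
  unfolding adj_nb by (rule exI[of _ 1]) (simp add: nb.simps)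
lemmas adjs = adj1 adj2 adj3 adj4

context cons begin

definition t0 :: tile where "t0 = (if ga = 0 then (0,0,True) else (ga-1,0,False))"

lemma conn_Q: assumes j: "even j" shows "t \<in> Q j \<Longrightarrow> (t, t0) \<in> (arel (Q j))\<^sup>*"
proof (induction "nat (ell t)" arbitrary: t rule: less_induct)
  case less
  have ar: "\<And>x y. x \<in> Q j \<Longrightarrow> y \<in> Q j \<Longrightarrow> tiles_adjacent x y \<Longrightarrow> (x, y) \<in> arel (Q j)"
    by (simp add: arel_def)
  have QR: "\<And>x. x \<in> Q j \<Longrightarrow> x \<in> R" by (simp add: Q_def)
  obtain a b u where t: "t = (a,b,u)" by (cases t)
  have tR: "(a,b,u) \<in> R" using less.prems t QR by simp
  have tQ: "(a,b,u) \<in> Q j" using less.prems t by simp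
  have el: "ell (a,b,u) = M * b + 2 * a + (if u then 0 else 1)" by (simp add: ell_def)
  have IH: "\<And>y. y \<in> Q j \<Longrightarrow> ell y < ell t \<Longrightarrow> (y, t0) \<in> (arel (Q j))\<^sup>*"
  proof -
    fix y assume y: "y \<in> Q j" "ell y < ell t"
    have "0 \<le> ell y" using ell_nonneg QR y(1) by blast
    then have "nat (ell y) < nat (ell t)" using y(2) by simp
    then show "(y, t0) \<in> (arel (Q j))\<^sup>*" using less.hyps y(1) by blast
  qed
  have via: "\<And>y. y \<in> Q j \<Longrightarrow> ell y < ell t \<Longrightarrow> tiles_adjacent t y \<Longrightarrow> (t, t0) \<in> (arel (Q j))\<^sup>*"
  proof -
    fix y assume y: "y \<in> Q j" "ell y < ell t" "tiles_adjacent t y"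
    have "(t, y) \<in> arel (Q j)" using ar less.prems y by simp
    then show "(t, t0) \<in> (arel (Q j))\<^sup>*" using IH[OF y(1,2)] by (rule converse_rtrancl_into_rtrancl)
  qed
  have r: "0 \<le> a" "a \<le> T - al - 1" "0 \<le> b" "b \<le> T - be - 1" "ga \<le> a + b + (if u then 0 else 1)"
    "a + b + (if u then 0 else 1) \<le> T - 1" "M * b + 2 * a + (if u then 0 else 1) \<le> j"
    using tQ by (auto simp: memQ memR)
  have Mb: "M * (b - 1) = M * b - M" by (simp add: algebra_simps)
  show ?case
  proof (cases u)
    case True
    from r True have r: "0 \<le> a" "a \<le> T - al - 1" "0 \<le> b" "b \<le> T - be - 1" "ga \<le> a + b"
      "a + b \<le> T - 1" "M * b + 2 * a \<le> j" by simp_all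
    show ?thesis
    proof (cases "a \<ge> 1")
      case True
      have "(a-1,b,False) \<in> Q j" using r True by (simp add: memQ memR)
      moreover have "ell (a-1,b,False) < ell t" using t \<open>u\<close> by (simp add: ell_def)
      moreover have "tiles_adjacent t (a-1,b,False)" using t \<open>u\<close> adj1 by simp
      ultimately show ?thesis by (rule via)
    next
      case False
      then have a0: "a = 0" using r by simp
      show ?thesis
      proof (cases "b \<ge> 1")
        case True
        have "(a,b-1,False) \<in> Q j" using r True a0 Mb M4 by (simp add: memQ memR)
        moreover have "ell (a,b-1,False) < ell t" using t \<open>u\<close> Mb M4 by (simp add: ell_def)
        moreover have "tiles_adjacent t (a,b-1,False)" using t \<open>u\<close> adj2 by simp
        ultimately show ?thesis by (rule via)
      next
        case False
        then have "b = 0" "ga = 0" using r a0 nn by auto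
        moreover have "t0 = (if ga = 0 then (0,0,True) else (ga-1,0,False))" by (rule t0_def)
        ultimately have "t = t0" using t a0 \<open>u\<close> by simp
        then show ?thesis by simp
      qed
    qed
  next
    case False
    from r False have r: "0 \<le> a" "a \<le> T - al - 1" "0 \<le> b" "b \<le> T - be - 1" "ga \<le> a + b + 1"
      "a + b + 1 \<le> T - 1" "M * b + 2 * a + 1 \<le> j" by simp_all
    show ?thesis
    proof (cases "a + b \<ge> ga")
      case True
      have "(a,b,True) \<in> Q j" using r True by (simp add: memQ memR)
      moreover have "ell (a,b,True) < ell t" using t False by (simp add: ell_def)
      moreover have "tiles_adjacent t (a,b,True)" using t False adj3 by simp
      ultimately show ?thesis by (rule via)
    next
      case c2: False
      then have z: "a + b + 1 = ga" using r by simp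
      show ?thesis
      proof (cases "b \<ge> 1")
        case True
        have t1Q: "(a+1,b,True) \<in> Q j"
        proof -
          obtain k where k: "M * b = 2 * k" using Meven by blast
          obtain m where m: "j = 2 * m" using j by (auto elim: evenE)
          have "2 * k + 2 * a + 1 \<le> 2 * m" using r(7) k m by simp
          then have "2 * k + 2 * a + 2 \<le> 2 * m" by presburger
          then have "M * b + 2 * (a + 1) \<le> j" using k m by simp
          moreover have "(a+1,b,True) \<in> R" using r z True sm nn gT by (simp add: memR)
          ultimately show ?thesis by (simp add: memQ)
        qed
        have t2Q: "(a+1,b-1,False) \<in> Q j" using r z True Mb M4 sm nn by (simp add: memQ memR)
        have "ell (a+1,b-1,False) < ell t" using t False Mb M4 by (simp add: ell_def)
        then have "((a+1,b-1,False), t0) \<in> (arel (Q j))\<^sup>*" using IH t2Q by blast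
        moreover have "((a+1,b,True), (a+1,b-1,False)) \<in> arel (Q j)"
          using ar[OF t1Q t2Q] adjs(2)[of "a+1" b] by simp
        moreover have "(t, (a+1,b,True)) \<in> arel (Q j)"
          using ar[OF less.prems t1Q] adjs(4)[of a b] t False by simp
        ultimately show ?thesis by (meson converse_rtrancl_into_rtrancl)
      next
        case False
        then have "b = 0" "a = ga - 1" "ga \<noteq> 0" using r z by auto
        moreover have "t0 = (if ga = 0 then (0,0,True) else (ga-1,0,False))" by (rule t0_def)
        ultimately have "t = t0" using t \<open>\<not> u\<close> by simp
        then show ?thesis by simp
      qed
    qed
  qed
qed

lemma poly_Q: assumes "even j" "Q j \<noteq> {}" shows "polyiamond (Q j)"
proof -
  have "\<forall>s\<in>Q j. \<forall>t\<in>Q j. (s, t) \<in> (arel (Q j))\<^sup>*"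
  proof (intro ballI)
    fix s t assume "s \<in> Q j" "t \<in> Q j"
    then have "(s, t0) \<in> (arel (Q j))\<^sup>*" "(t, t0) \<in> (arel (Q j))\<^sup>*" using conn_Q[OF assms(1)] by auto
    then show "(s, t) \<in> (arel (Q j))\<^sup>*" using rt_sym rtrancl_trans by fast
  qed
  then show ?thesis using assms(2) finite_Q by (simp add: polyiamond_iff)
qed

lemma perim_Q: assumes "even j" shows "int (perimeter (Q j)) \<le> 3 * T - al - be - ga"
proof -
  have p: "perimeter (Q j) \<le> card (xc ` Q j) + card (yc ` Q j) + card (zc ` Q j)"
    by (rule perim_upper[OF finite_Q conv_x conv_y conv_z[OF assms]])
  have "xc ` Q j \<subseteq> {0 .. T - al - 1}"
  proof
    fix v assume "v \<in> xc ` Q j"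
    then obtain t where "t \<in> Q j" "v = xc t" by auto
    then show "v \<in> {0 .. T - al - 1}" by (cases t) (auto simp: memQ memR)
  qed
  then have cx: "card (xc ` Q j) \<le> nat (T - al)" using card_mono[of "{0 .. T - al - 1}"] by fastforce
  have "yc ` Q j \<subseteq> {0 .. T - be - 1}"
  proof
    fix v assume "v \<in> yc ` Q j"
    then obtain t where "t \<in> Q j" "v = yc t" by auto
    then show "v \<in> {0 .. T - be - 1}" by (cases t) (auto simp: memQ memR)
  qed
  then have cy: "card (yc ` Q j) \<le> nat (T - be)" using card_mono[of "{0 .. T - be - 1}"] by fastforce
  have "zc ` Q j \<subseteq> {ga .. T - 1}"
  proof
    fix v assume "v \<in> zc ` Q j"
    then obtain t where "t \<in> Q j" "v = zc t" by auto
    then show "v \<in> {ga .. T - 1}" by (cases t) (auto simp: memQ memR)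
  qed
  then have cz: "card (zc ` Q j) \<le> nat (T - ga)" using card_mono[of "{ga .. T - 1}"] by fastforce
  show ?thesis using p cx cy cz sm nn by linarith
qed

end


lemma ivt2:
  fixes g :: "nat \<Rightarrow> nat"
  assumes g0: "g 0 = 0" and gK: "n \<le> g K" and st: "\<And>k. g (Suc k) \<le> g k + 2" and n1: "1 \<le> n"
  shows "\<exists>k. g k = n \<or> g k + 1 = n"
proof -
  define k where "k = (LEAST k. n \<le> g k)"
  have k1: "n \<le> g k" unfolding k_def by (rule LeastI[of _ K]) (rule gK)
  have k0: "k \<noteq> 0" using k1 g0 n1 by (cases k) auto
  then obtain k' where k': "k = Suc k'" by (cases k) auto
  have "\<not> n \<le> g k'" unfolding k_def
  proof
    assume "n \<le> g k'"
    then have "(LEAST k. n \<le> g k) \<le> k'" by (rule Least_le)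
    then show False using k' unfolding k_def by simp
  qed
  then have "g k' < n" by simp
  moreover have "g k \<le> g k' + 2" using st k' by simp
  ultimately have "g k = n \<or> g k' + 1 = n" using k1 by linarith
  then show ?thesis by blast
qed

context cons begin

lemma card_ell: "card {t \<in> R. ell t = c} \<le> 1"
proof -
  have f: "finite {t \<in> R. ell t = c}" by (rule finite_subset[OF _ finite_R]) blast
  have "\<forall>a1\<in>{t \<in> R. ell t = c}. \<forall>a2\<in>{t \<in> R. ell t = c}. a1 = a2"
  proof (intro ballI)
    fix a1 a2 assume "a1 \<in> {t \<in> R. ell t = c}" "a2 \<in> {t \<in> R. ell t = c}"
    then have "a1 \<in> R" "a2 \<in> R" "ell a1 = ell a2" by simp_all
    then show "a1 = a2" by (rule ell_inj)
  qed
  then have "card {t \<in> R. ell t = c} \<le> Suc 0" by (simp only: card_le_Suc0_iff_eq[OF f])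
  then show ?thesis by simp
qed

lemma cardQ_step: "card (Q (j + 2)) \<le> card (Q j) + 2"
proof -
  have "Q (j + 2) \<subseteq> Q j \<union> ({t \<in> R. ell t = j + 1} \<union> {t \<in> R. ell t = j + 2})" by (auto simp: Q_def)
  then have "card (Q (j + 2)) \<le> card (Q j \<union> ({t \<in> R. ell t = j + 1} \<union> {t \<in> R. ell t = j + 2}))"
    by (rule card_mono[rotated]) (simp add: finite_Q finite_R)
  also have "\<dots> \<le> card (Q j) + (card {t \<in> R. ell t = j + 1} + card {t \<in> R. ell t = j + 2})"
    by (intro order_trans[OF card_Un_le] add_left_mono card_Un_le)
  finally show ?thesis using card_ell[of "j+1"] card_ell[of "j+2"] by linarith
qed

lemma Q_low: "Q (-2) = {}"
proof -
  have "\<And>t. t \<in> R \<Longrightarrow> \<not> ell t \<le> -2"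
  proof -
    fix t assume "t \<in> R" then have "0 \<le> ell t" by (rule ell_nonneg)
    then show "\<not> ell t \<le> -2" by simp
  qed
  then show ?thesis unfolding Q_def by blast
qed

lemma Q_high: "j \<ge> M * T \<Longrightarrow> Q j = R"
proof -
  assume j: "j \<ge> M * T"
  have "\<And>t. t \<in> R \<Longrightarrow> ell t \<le> j"
  proof -
    fix t assume "t \<in> R" then have "ell t \<le> M * T" by (rule ell_le)
    then show "ell t \<le> j" using j by simp
  qed
  then show ?thesis unfolding Q_def by blast
qed

lemma cons_main:
  assumes n2: "2 \<le> n" and nR: "n \<le> card R"
  shows "\<exists>A. polyiamond A \<and> (card A = n \<or> card A + 1 = n) \<and> int (perimeter A) \<le> 3 * T - al - be - ga"
proof -
  define g where "g k = card (Q (2 * int k - 2))" for k :: nat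
  define K where "K = nat (M * T) + 1"
  have g0: "g 0 = 0" using Q_low by (simp add: g_def)
  have MT: "0 \<le> M * T" using M4 T1 by simp
  have "2 * int K - 2 = 2 * (M * T)" using MT by (simp add: K_def)
  then have "Q (2 * int K - 2) = R" using MT by (intro Q_high) linarith
  then have gK: "n \<le> g K" using nR by (simp add: g_def)
  have st: "\<And>k. g (Suc k) \<le> g k + 2"
  proof -
    fix k
    have "card (Q ((2 * int k - 2) + 2)) \<le> card (Q (2 * int k - 2)) + 2" by (rule cardQ_step)
    then show "g (Suc k) \<le> g k + 2" by (simp add: g_def algebra_simps)
  qed
  obtain k where k: "g k = n \<or> g k + 1 = n" using ivt2[of g n K, OF g0 gK st] n2 by auto
  define A where "A = Q (2 * int k - 2)"
  have ev: "even (2 * int k - 2)" by simp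
  have ne: "A \<noteq> {}"
  proof
    assume "A = {}"
    then have "g k = 0" by (simp add: g_def A_def)
    then show False using k n2 by auto
  qed
  have "polyiamond A" unfolding A_def by (rule poly_Q[OF ev ne[unfolded A_def]])
  moreover have "int (perimeter A) \<le> 3 * T - al - be - ga" unfolding A_def by (rule perim_Q[OF ev])
  moreover have "card A = n \<or> card A + 1 = n" using k by (simp add: g_def A_def)
  ultimately show ?thesis by (intro exI[of _ A] conjI)
qed

end


lemma sq_par: "even ((x::int)^2 - x)"
proof -
  have "(x::int)^2 - x = x * (x - 1)" by (simp add: power2_eq_square algebra_simps)
  moreover have "even (x * (x - 1))" by simp
  ultimately show ?thesis by simp
qed

lemma single_poly: "polyiamond {t}"
  by (simp add: polyiamond_iff)

lemma single_perim: "perimeter {t} = 3"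
proof -
  have "int (card (bd (insert t {}))) = int (card (bd {})) + 3 - 2 * int (card {d. d < 3 \<and> nb d t \<in> {}})"
    by (rule bd_insert) simp_all
  moreover have "bd {} = {}" by (simp add: bd_def)
  ultimately have "card (bd {t}) = 3" by simp
  then show ?thesis using perim_bd[of "{t}"] by simp
qed

lemma exists_S:
  fixes S n :: nat
  assumes S3: "S \<ge> 3" and n1: "n \<ge> 1" and par: "even (n + S)" and sq: "6 * n \<le> S^2"
  shows "\<exists>A. polyiamond A \<and> card A = n \<and> perimeter A \<le> S"
proof (cases "n = 1")
  case True
  then show ?thesis using single_poly single_perim S3 by (intro exI[of _ "{(0,0,True)}"]) simp
next
  case False
  then have n2: "n \<ge> 2" using n1 by simp
  define T :: int where "T = int S div 2"
  define sg :: int where "sg = 3 * T - int S"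
  define ga :: int where "ga = sg div 3"
  define be :: int where "be = (sg + 1) div 3"
  define al :: int where "al = (sg + 2) div 3"
  have TS: "int S = 2 * T \<or> int S = 2 * T + 1" unfolding T_def by presburger
  have T1: "T \<ge> 1" using S3 unfolding T_def by simp
  have sg0: "sg = T \<or> sg = T - 1" using TS unfolding sg_def by auto
  have sgsum: "al + be + ga = sg" unfolding al_def be_def ga_def by presburger
  have nn: "al \<ge> 0" "be \<ge> 0" "ga \<ge> 0" using sg0 T1 unfolding al_def be_def ga_def by auto
  have gT: "ga \<le> T - 1" using sg0 T1 unfolding ga_def by auto
  interpret C: cons T al be ga
    by unfold_locales (use T1 nn sgsum sg0 gT in linarith)+
  have S3T: "3 * T - al - be - ga = int S" using sgsum unfolding sg_def by simp
  have diffs: "(al - be)^2 + (be - ga)^2 + (ga - al)^2 \<le> 2"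
  proof -
    have "sg mod 3 = 0 \<or> sg mod 3 = 1 \<or> sg mod 3 = 2" by presburger
    then have "(al = ga \<and> be = ga) \<or> (al = ga + 1 \<and> be = ga)
      \<or> (al = ga + 1 \<and> be = ga + 1)" unfolding al_def be_def ga_def by presburger
    then show ?thesis by (elim disjE conjE) simp_all
  qed
  have Tsg: "(T - sg)^2 \<le> 1" using sg0 by auto
  have ident: "(3*T - al - be - ga)^2 - 6 * (T^2 - al^2 - be^2 - ga^2) =
      3*(T - (al + be + ga))^2 + 2*((al-be)^2 + (be-ga)^2 + (ga-al)^2)"
    by (simp add: power2_eq_square algebra_simps)
  have cR: "int (card C.R) = T^2 - al^2 - be^2 - ga^2" by (rule C.card_R)
  have "(int S)^2 - 6 * int (card C.R) \<le> 7"
    using ident S3T cR diffs Tsg sgsum by simp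
  moreover have "6 * int n \<le> (int S)^2" using sq by (simp flip: of_nat_power)
  ultimately have lo: "int n - 1 \<le> int (card C.R)" by linarith
  have parR: "even (int (card C.R) - int S)"
  proof -
    have "int (card C.R) - int S = (T^2 - T) - (al^2 - al) - (be^2 - be) - (ga^2 - ga) - 2 * T"
      using cR S3T by simp
    moreover have "even ((T^2 - T) - (al^2 - al) - (be^2 - be) - (ga^2 - ga) - 2 * T)"
      using sq_par[of T] sq_par[of al] sq_par[of be] sq_par[of ga] by simp
    ultimately show ?thesis by simp
  qed
  have parn: "even (int n + int S)" using par by (simp flip: of_nat_add)
  have "int n \<le> int (card C.R)"
  proof (rule ccontr)
    assume "\<not> int n \<le> int (card C.R)"
    then have "int (card C.R) = int n - 1" using lo by simp
    then show False using parR parn by presburger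
  qed
  then have nR: "n \<le> card C.R" by simp
  obtain A where A: "polyiamond A" "card A = n \<or> card A + 1 = n" "int (perimeter A) \<le> 3 * T - al - be - ga"
    using C.cons_main[OF n2 nR] by blast
  have pA: "perimeter A \<le> S" using A(3) S3T by simp
  show ?thesis
  proof (cases "card A = n")
    case True
    then show ?thesis using A(1) pA by blast
  next
    case False
    then have cA: "card A + 1 = n" using A(2) by simp
    have fA: "finite A" using A(1) by (simp add: polyiamond_iff)
    have "even (perimeter A + card A)" by (rule perim_parity[OF fA])
    then have "perimeter A \<noteq> S" using par cA by presburger
    then have pA': "perimeter A + 1 \<le> S" using pA by simp
    obtain u where u: "u \<notin> A" "polyiamond (insert u A)" "perimeter (insert u A) \<le> perimeter A + 1"
      using extend[OF A(1)] by blast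
    have "card (insert u A) = n" using u(1) fA cA by simp
    then show ?thesis using u pA' by (intro exI[of _ "insert u A"]) simp
  qed
qed


lemma pmin_exists: assumes "n \<ge> 1"
  shows "\<exists>A. polyiamond A \<and> card A = n \<and> perimeter A = p_min n"
proof -
  have "\<exists>A. polyiamond A \<and> card A = n \<and> perimeter A \<le> 3 * n"
  proof (rule exists_S)
    show "3 * n \<ge> 3" "n \<ge> 1" using assms by auto
    show "even (n + 3 * n)" by simp
    have "n \<le> n * n" using assms by simp
    then have "6 * n \<le> 9 * (n * n)" by linarith
    then show "6 * n \<le> (3 * n)^2" by (simp add: power2_eq_square)
  qed
  then have "\<exists>p A. polyiamond A \<and> card A = n \<and> perimeter A = p" by blast
  then have "\<exists>A. polyiamond A \<and> card A = n \<and> perimeter A = (LEAST p. \<exists>A. polyiamond A \<and> card A = n \<and> perimeter A = p)"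
    by (rule LeastI_ex)
  then show ?thesis by (simp add: p_min_def)
qed

lemma pmin_le: "polyiamond A \<Longrightarrow> card A = n \<Longrightarrow> p_min n \<le> perimeter A"
  unfolding p_min_def by (rule Least_le) blast

lemma pmin_par: "n \<ge> 1 \<Longrightarrow> even (p_min n + n)"
  using pmin_exists perim_parity by (metis polyiamond_iff)

lemma pmin_sq: "n \<ge> 1 \<Longrightarrow> 6 * n \<le> (p_min n)^2"
  using pmin_exists isoperimetric by metis

lemma pmin_ub: assumes "n \<ge> 1" "S \<ge> 3" "even (n + S)" "6 * n \<le> S^2" shows "p_min n \<le> S"
proof -
  obtain A where "polyiamond A" "card A = n" "perimeter A \<le> S" using exists_S[OF assms(2,1,3,4)] by blast
  then show ?thesis using pmin_le by (meson le_trans)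
qed

lemma pmin_3: assumes "n \<ge> 1" shows "p_min n \<ge> 3"
proof (rule ccontr)
  assume "\<not> 3 \<le> p_min n"
  then have "p_min n \<le> 2" by simp
  then have "(p_min n)^2 \<le> 2^2" by (rule power_mono) simp
  then show False using pmin_sq[OF assms] assms by simp
qed

theorem lemma1:
  fixes n :: nat
  assumes "n \<ge> 1"
  shows "(int (p_min (n + 1)) = int (p_min n) + 1 \<or> int (p_min (n + 1)) = int (p_min n) - 1)
    \<and> (\<forall>k::nat. k \<ge> 1 \<longrightarrow>
         int (p_min n) - 1 \<le> int (p_min (n + k)) \<and> int (p_min (n + k)) \<le> int (p_min n) + int k)
    \<and> (int (p_min (n + 1)) = int (p_min n) + 1 \<longrightarrow>
         (\<forall>k::nat. k \<ge> 1 \<longrightarrow> p_min n \<le> p_min (n + k)))"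
proof -
  define q where "q = p_min n"
  have q3: "q \<ge> 3" using pmin_3[OF assms] by (simp add: q_def)
  have qp: "even (q + n)" using pmin_par[OF assms] by (simp add: q_def)
  have qs: "6 * n \<le> q^2" using pmin_sq[OF assms] by (simp add: q_def)
  have upper: "\<And>k. k \<ge> 1 \<Longrightarrow> p_min (n + k) \<le> q + k"
  proof -
    fix k :: nat assume k: "k \<ge> 1"
    have a: "3 * k \<le> q * k" using q3 by (rule mult_right_mono) simp
    have b: "(q + k)^2 = q^2 + 2 * (q * k) + k * k" by (simp add: power2_eq_square algebra_simps)
    have c: "6 * k \<le> 2 * (q * k)" using a by simp
    have "6 * n + 6 * k \<le> q^2 + 2 * (q * k)" using add_mono[OF qs c] .
    then have "6 * (n + k) \<le> q^2 + 2 * (q * k) + k * k" by simp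
    then have sq: "6 * (n + k) \<le> (q + k)^2" unfolding b .
    have ev: "even (n + k + (q + k))" using qp by presburger
    show "p_min (n + k) \<le> q + k" by (rule pmin_ub) (use k q3 ev sq in auto)
  qed
  have lower: "\<And>k. k \<ge> 1 \<Longrightarrow> q \<le> p_min (n + k) + 1"
  proof -
    fix k :: nat assume k: "k \<ge> 1"
    define r where "r = p_min (n + k)"
    have r3: "r \<ge> 3" using pmin_3[of "n+k"] k by (simp add: r_def)
    have rs: "6 * (n + k) \<le> r^2" using pmin_sq[of "n+k"] k by (simp add: r_def)
    show "q \<le> p_min (n + k) + 1"
    proof (cases "even (n + r)")
      case True
      have "6 * n \<le> r^2" using rs by simp
      then have "q \<le> r" unfolding q_def using assms r3 True by (intro pmin_ub) simp_all
      then show ?thesis by (simp add: r_def)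
    next
      case False
      have rr: "r^2 \<le> (r+1)^2" by (rule power_mono) simp_all
      have "6 * n \<le> 6 * (n + k)" by simp
      then have "6 * n \<le> (r+1)^2" using order_trans[OF order_trans[OF _ rs] rr] by blast
      moreover have "even (n + (r + 1))" using False by simp
      ultimately have "q \<le> r + 1" unfolding q_def using assms r3 by (intro pmin_ub) simp_all
      then show ?thesis by (simp add: r_def)
    qed
  qed
  have par1: "even (p_min (n+1) + (n+1))" using pmin_par[of "n+1"] by simp
  have ne: "p_min (n+1) \<noteq> q" using par1 qp by presburger
  have c1: "int (p_min (n + 1)) = int q + 1 \<or> int (p_min (n + 1)) = int q - 1"
    using upper[of 1] lower[of 1] ne by linarith
  have c2: "\<forall>k::nat. k \<ge> 1 \<longrightarrow> int q - 1 \<le> int (p_min (n + k)) \<and> int (p_min (n + k)) \<le> int q + int k"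
    using upper lower by fastforce
  have c3: "int (p_min (n + 1)) = int q + 1 \<longrightarrow> (\<forall>k::nat. k \<ge> 1 \<longrightarrow> q \<le> p_min (n + k))"
  proof (intro impI allI)
    fix k :: nat assume h: "int (p_min (n + 1)) = int q + 1" and k: "k \<ge> 1"
    show "q \<le> p_min (n + k)"
    proof (rule ccontr)
      assume "\<not> q \<le> p_min (n + k)"
      then have r: "p_min (n + k) + 1 = q" using lower[OF k] by simp
      have r3: "p_min (n + k) \<ge> 3" using pmin_3[of "n+k"] k by simp
      have rs: "6 * (n + k) \<le> (p_min (n + k))^2" using pmin_sq[of "n+k"] k by simp
      have "6 * (n + 1) \<le> (p_min (n + k))^2" using rs k by simp
      moreover have "even ((n + 1) + p_min (n + k))" using qp r by presburger
      ultimately have "p_min (n + 1) \<le> p_min (n + k)" using r3 by (intro pmin_ub) simp_all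
      then show False using h r by simp
    qed
  qed
  show ?thesis using c1 c2 c3 by (simp add: q_def)
qed


end
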